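(* Let $k$ be a positive integer and let $D$ be a digraph of order $n$ with no isolated vertex such that $\Delta^-(D)\ge\Delta^+(D)\ge1$. If $k>(\Delta^-(D))^2$, then $\gamma_{trk}(D)=n$.
   Context: All digraphs are finite, with no loops or multiple arcs (pairs of opposite arcs are allowed). $N^-(v)$ denotes the set of in-neighbors of $v$; $\Delta^+(D)$ and $\Delta^-(D)$ are the maximum out-degree and maximum in-degree of $D$. A vertex is isolated if it has no in-neighbor and no out-neighbor. For a positive integer $k$, a $k$-rainbow dominating function ($k$RDF) on $D$ is a function $f:V(D)\to\mathcal P(\{1,\dots,k\})$ such that every $v$ with $f(v)=\emptyset$ satisfies $\bigcup_{u\in N^-(v)}f(u)=\{1,\dots,k\}$; its weight is $\omega(f)=\sum_v|f(v)|$. If $D$ has no isolated vertex, a total $k$RDF (T$k$RDF) is a $k$RDF $f$ such that the subdigraph induced by $\{v:f(v)\ne\emptyset\}$ has no isolated vertex; $\gamma_{trk}(D)$ is the minimum weight of a T$k$RDF. *)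

theory Defs
  imports Main
begin

definition digraph :: "'a set \<Rightarrow> ('a \<Rightarrow> 'a \<Rightarrow> bool) \<Rightarrow> bool" where
  "digraph V A \<longleftrightarrow> finite V \<and> (\<forall>u v. A u v \<longrightarrow> u \<in> V \<and> v \<in> V) \<and> (\<forall>v. \<not> A v v)"

definition in_nbrs :: "'a set \<Rightarrow> ('a \<Rightarrow> 'a \<Rightarrow> bool) \<Rightarrow> 'a \<Rightarrow> 'a set" where
  "in_nbrs V A v = {u \<in> V. A u v}"

definition out_nbrs :: "'a set \<Rightarrow> ('a \<Rightarrow> 'a \<Rightarrow> bool) \<Rightarrow> 'a \<Rightarrow> 'a set" where
  "out_nbrs V A v = {w \<in> V. A v w}"

definition max_outdeg :: "'a set \<Rightarrow> ('a \<Rightarrow> 'a \<Rightarrow> bool) \<Rightarrow> nat" where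
  "max_outdeg V A = Max ((\<lambda>v. card (out_nbrs V A v)) ` V)"

definition max_indeg :: "'a set \<Rightarrow> ('a \<Rightarrow> 'a \<Rightarrow> bool) \<Rightarrow> nat" where
  "max_indeg V A = Max ((\<lambda>v. card (in_nbrs V A v)) ` V)"

definition isolated :: "'a set \<Rightarrow> ('a \<Rightarrow> 'a \<Rightarrow> bool) \<Rightarrow> 'a \<Rightarrow> bool" where
  "isolated V A v \<longleftrightarrow> in_nbrs V A v = {} \<and> out_nbrs V A v = {}"

definition kRDF :: "nat \<Rightarrow> 'a set \<Rightarrow> ('a \<Rightarrow> 'a \<Rightarrow> bool) \<Rightarrow> ('a \<Rightarrow> nat set) \<Rightarrow> bool" where
  "kRDF k V A f \<longleftrightarrow>
     (\<forall>v. v \<notin> V \<longrightarrow> f v = {}) \<and>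
     (\<forall>v\<in>V. f v \<subseteq> {1..k}) \<and>
     (\<forall>v\<in>V. f v = {} \<longrightarrow> (\<Union>u\<in>in_nbrs V A v. f u) = {1..k})"

definition weight :: "'a set \<Rightarrow> ('a \<Rightarrow> nat set) \<Rightarrow> nat" where
  "weight V f = (\<Sum>v\<in>V. card (f v))"

text \<open>Total kRDF: the subdigraph induced by {v. f v \<noteq> {}} has no isolated vertex.\<close>
definition TkRDF :: "nat \<Rightarrow> 'a set \<Rightarrow> ('a \<Rightarrow> 'a \<Rightarrow> bool) \<Rightarrow> ('a \<Rightarrow> nat set) \<Rightarrow> bool" where
  "TkRDF k V A f \<longleftrightarrow> kRDF k V A f \<and>
     (\<forall>v\<in>V. f v \<noteq> {} \<longrightarrow> (\<exists>u\<in>V. f u \<noteq> {} \<and> (A u v \<or> A v u)))"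

definition gamma_trk :: "nat \<Rightarrow> 'a set \<Rightarrow> ('a \<Rightarrow> 'a \<Rightarrow> bool) \<Rightarrow> nat" where
  "gamma_trk k V A = Min {weight V f | f. TkRDF k V A f}"

end

theory Submission
  imports Defs
begin

lemma lower:
  fixes V :: "'a set" and A :: "'a \<Rightarrow> 'a \<Rightarrow> bool"
  assumes dg: "digraph V A" and T: "TkRDF k V A f"
    and D1: "d \<ge> 1"
    and din: "\<And>v. v \<in> V \<Longrightarrow> card (in_nbrs V A v) \<le> d"
    and dout: "\<And>v. v \<in> V \<Longrightarrow> card (out_nbrs V A v) \<le> d"
    and kd: "k \<ge> 2 * d"
  shows "card V \<le> weight V f"
proof -
  have fin: "finite V" using dg by (simp add: digraph_def)
  have K: "kRDF k V A f" using T by (simp add: TkRDF_def)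
  have sub: "\<And>v. v \<in> V \<Longrightarrow> f v \<subseteq> {1..k}" using K by (simp add: kRDF_def)
  have finf: "\<And>v. v \<in> V \<Longrightarrow> finite (f v)" using sub finite_subset by blast
  define V1 where "V1 = {v\<in>V. f v \<noteq> {}}"
  define V0 where "V0 = {v\<in>V. f v = {}}"
  have VU: "V = V1 \<union> V0" and VD: "V1 \<inter> V0 = {}" by (auto simp: V1_def V0_def)
  have fV1: "finite V1" "finite V0" using fin by (auto simp: V1_def V0_def)
  define g where "g u = card (f u) - 1" for u
  have per: "d \<le> (\<Sum>u\<in>in_nbrs V A v \<inter> V1. g u)" if v: "v \<in> V0" for v
  proof -
    let ?N = "in_nbrs V A v \<inter> V1"
    have fN: "finite ?N" using fV1 by auto
    have un: "(\<Union>u\<in>in_nbrs V A v. f u) = {1..k}" using K v by (auto simp: kRDF_def V0_def)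
    have "(\<Union>u\<in>in_nbrs V A v. f u) = (\<Union>u\<in>?N. f u)"
      by (auto simp: V1_def in_nbrs_def)
    moreover have "card {1..k} = k" by simp
    ultimately have "k = card (\<Union>u\<in>?N. f u)" using un by metis
    also have "\<dots> \<le> (\<Sum>u\<in>?N. card (f u))" by (rule card_UN_le[OF fN])
    also have "\<dots> = (\<Sum>u\<in>?N. g u + 1)"
    proof (rule sum.cong)
      fix u assume "u \<in> ?N"
      hence "u \<in> V" "f u \<noteq> {}" by (auto simp: V1_def)
      hence "card (f u) \<ge> 1" using finf by (simp add: Suc_le_eq card_gt_0_iff)
      thus "card (f u) = g u + 1" by (simp add: g_def)
    qed simp
    also have "\<dots> = (\<Sum>u\<in>?N. g u) + card ?N" by (simp only: sum.distrib card_eq_sum)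
    also have "card ?N \<le> d"
    proof -
      have "v \<in> V" using v by (simp add: V0_def)
      have "card ?N \<le> card (in_nbrs V A v)"
        by (rule card_mono) (auto simp: in_nbrs_def fin)
      thus ?thesis using din[OF \<open>v\<in>V\<close>] by simp
    qed
    finally show ?thesis using kd by simp
  qed
  have "d * card V0 = (\<Sum>v\<in>V0. d)" by simp
  also have "\<dots> \<le> (\<Sum>v\<in>V0. \<Sum>u\<in>in_nbrs V A v \<inter> V1. g u)" by (rule sum_mono) (rule per)
  also have "\<dots> = (\<Sum>v\<in>V0. \<Sum>u\<in>V1. if A u v then g u else 0)"
  proof (rule sum.cong)
    fix v assume "v \<in> V0"
    have "in_nbrs V A v \<inter> V1 = {u\<in>V1. A u v}" by (auto simp: in_nbrs_def V1_def)
    thus "(\<Sum>u\<in>in_nbrs V A v \<inter> V1. g u) = (\<Sum>u\<in>V1. if A u v then g u else 0)"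
      using fV1 by (simp add: sum.inter_filter)
  qed simp
  also have "\<dots> = (\<Sum>u\<in>V1. \<Sum>v\<in>V0. if A u v then g u else 0)" by (rule sum.swap)
  also have "\<dots> \<le> (\<Sum>u\<in>V1. d * g u)"
  proof (rule sum_mono)
    fix u assume u: "u \<in> V1"
    have "(\<Sum>v\<in>V0. if A u v then g u else 0) = (\<Sum>v\<in>{v\<in>V0. A u v}. g u)"
      using fV1 by (intro sum.inter_filter[symmetric]) auto
    also have "\<dots> = card {v\<in>V0. A u v} * g u" by simp
    also have "card {v\<in>V0. A u v} \<le> card (out_nbrs V A u)"
      by (rule card_mono) (auto simp: out_nbrs_def fin V0_def)
    also have "\<dots> \<le> d" using dout u by (simp add: V1_def)
    finally show "(\<Sum>v\<in>V0. if A u v then g u else 0) \<le> d * g u" by simp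
  qed
  also have "\<dots> = d * (\<Sum>u\<in>V1. g u)" by (simp add: sum_distrib_left)
  finally have "card V0 \<le> (\<Sum>u\<in>V1. g u)" using D1 by simp
  moreover have "(\<Sum>u\<in>V1. card (f u)) = (\<Sum>u\<in>V1. g u) + card V1"
  proof -
    have "(\<Sum>u\<in>V1. card (f u)) = (\<Sum>u\<in>V1. g u + 1)"
    proof (rule sum.cong)
      fix u assume "u \<in> V1"
      hence "u \<in> V" "f u \<noteq> {}" by (auto simp: V1_def)
      hence "card (f u) \<ge> 1" using finf by (simp add: Suc_le_eq card_gt_0_iff)
      thus "card (f u) = g u + 1" by (simp add: g_def)
    qed simp
    thus ?thesis by (simp only: sum.distrib card_eq_sum)
  qed
  moreover have "weight V f = (\<Sum>u\<in>V1. card (f u))"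
  proof -
    have "weight V f = (\<Sum>u\<in>V1. card (f u)) + (\<Sum>u\<in>V0. card (f u))"
      unfolding weight_def VU by (rule sum.union_disjoint[OF fV1 VD])
    moreover have "(\<Sum>u\<in>V0. card (f u)) = 0" by (simp add: V0_def)
    ultimately show ?thesis by simp
  qed
  moreover have "card V = card V1 + card V0"
    unfolding VU by (rule card_Un_disjoint[OF fV1 VD])
  ultimately show ?thesis by linarith
qed

theorem corollary3p3:
  fixes V :: "'a set" and A :: "'a \<Rightarrow> 'a \<Rightarrow> bool" and k n :: nat
  assumes "digraph V A"
    and "card V = n"
    and "k \<ge> 1"
    and "\<forall>v\<in>V. \<not> isolated V A v"
    and "max_indeg V A \<ge> max_outdeg V A"
    and "max_outdeg V A \<ge> 1"
    and "k > (max_indeg V A)^2"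
  shows "gamma_trk k V A = n"
proof -
  let ?d = "max_indeg V A"
  have fin: "finite V" using assms(1) by (simp add: digraph_def)
  have din: "card (in_nbrs V A v) \<le> ?d" if "v \<in> V" for v
    unfolding max_indeg_def by (rule Max_ge) (use fin that in auto)
  have dout: "card (out_nbrs V A v) \<le> ?d" if "v \<in> V" for v
  proof -
    have "card (out_nbrs V A v) \<le> max_outdeg V A"
      unfolding max_outdeg_def by (rule Max_ge) (use fin that in auto)
    thus ?thesis using assms(5) by simp
  qed
  have D1: "?d \<ge> 1" using assms(5,6) by simp
  have "2 * ?d \<le> ?d ^ 2 + 1"
  proof (cases "?d \<ge> 2")
    case True
    hence "2 * ?d \<le> ?d * ?d" by (intro mult_right_mono) auto
    moreover have "?d ^ 2 = ?d * ?d" by (simp add: power2_eq_square)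
    ultimately show ?thesis by linarith
  next
    case False
    hence "?d = 1" using D1 by linarith
    thus ?thesis by simp
  qed
  hence kd: "k \<ge> 2 * ?d" using assms(7) by simp
  define S where "S = {weight V f | f. TkRDF k V A f}"
  define f0 where "f0 v = (if v \<in> V then {1::nat} else {})" for v
  have T0: "TkRDF k V A f0"
  proof -
    have k1: "kRDF k V A f0"
      unfolding kRDF_def
    proof (intro conjI)
      show "\<forall>v. v \<notin> V \<longrightarrow> f0 v = {}" by (simp add: f0_def)
      show "\<forall>v\<in>V. f0 v \<subseteq> {1..k}" using assms(3) by (simp add: f0_def)
      show "\<forall>v\<in>V. f0 v = {} \<longrightarrow> (\<Union>u\<in>in_nbrs V A v. f0 u) = {1..k}"
        by (simp add: f0_def)
    qed
    have "\<exists>u\<in>V. f0 u \<noteq> {} \<and> (A u v \<or> A v u)" if v: "v \<in> V" for v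
    proof -
      have "\<not> isolated V A v" using assms(4) v by simp
      then obtain u where "u \<in> V" "A u v \<or> A v u"
        unfolding isolated_def in_nbrs_def out_nbrs_def by blast
      thus ?thesis by (auto simp: f0_def)
    qed
    thus ?thesis using k1 by (simp add: TkRDF_def)
  qed
  have w0: "weight V f0 = n" using assms(2) by (simp add: weight_def f0_def)
  have nS: "n \<in> S"
  proof -
    have "n = weight V f0 \<and> TkRDF k V A f0" using T0 w0 by simp
    thus ?thesis unfolding S_def by blast
  qed
  have lb: "\<forall>x\<in>S. n \<le> x"
  proof
    fix x assume "x \<in> S"
    then obtain f where x: "x = weight V f" and T: "TkRDF k V A f" unfolding S_def by auto
    show "n \<le> x" using lower[OF assms(1) T D1 din dout kd] assms(2) x by simp
  qed
  have finS: "finite S"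
  proof -
    have "S \<subseteq> {0..n*k}"
    proof
      fix x assume "x \<in> S"
      then obtain f where x: "x = weight V f" and T: "TkRDF k V A f" unfolding S_def by auto
      have "\<And>v. v \<in> V \<Longrightarrow> card (f v) \<le> k"
      proof -
        fix v assume "v \<in> V"
        hence "f v \<subseteq> {1..k}" using T by (simp add: TkRDF_def kRDF_def)
        thus "card (f v) \<le> k" using card_mono[of "{1..k}" "f v"] by simp
      qed
      hence "weight V f \<le> card V * k" unfolding weight_def
        using sum_bounded_above[of V "\<lambda>v. card (f v)" k] by simp
      thus "x \<in> {0..n*k}" using x assms(2) by simp
    qed
    thus ?thesis by (rule finite_subset[OF _ finite_atLeastAtMost])
  qed
  have "Min S = n"
    using nS lb finS by (intro Min_eqI) auto
  thus ?thesis by (simp add: gamma_trk_def S_def)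
qed

end
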